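(* Let $q$ be a prime power. Let $2\leq s\leq k$ be integers. Then \[ n_q(k,s)\leq \frac{q^3-q+1}{q^4}\genfrac{[}{]}{0pt}{}{k}{s}_q. \]
   Context: For a $(k - s)$-dimensional affine subspace $H$ of $\mathbb{F}_q^k$ not passing through the origin, $n_q(k,s)$ denotes the number of $s$-dimensional affine subspaces through the origin that are disjoint from $H$ (this is independent of the choice of $H$). For integers $0 \leq s \leq k$, the $q$-binomial (Gaussian) coefficient is $\genfrac{[}{]}{0pt}{}{k}{s}_q = \frac{(q^k - 1) \cdots (q^{k - s+ 1} - 1)}{(q^s - 1) \cdots (q - 1)}$ (empty product equal to $1$), and it is defined to be $0$ for other values of $s,k$. *)

theory Defs
  imports "HOL-Analysis.Analysis"
begin

definition qbinom :: "nat \<Rightarrow> nat \<Rightarrow> nat \<Rightarrow> real" where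
  "qbinom q k s = (if s \<le> k then
      (\<Prod>i<s. (real q ^ (k - i) - 1)) / (\<Prod>i\<in>{1..s}. (real q ^ i - 1))
    else 0)"

definition lin_subspaces :: "nat \<Rightarrow> ('a::field ^ 'n) set set" where
  "lin_subspaces d = {S. vec.subspace S \<and> vec.dim S = d}"

definition aff_subspace :: "nat \<Rightarrow> ('a::field ^ 'n) set \<Rightarrow> bool" where
  "aff_subspace d H \<longleftrightarrow> (\<exists>v W. W \<in> lin_subspaces d \<and> H = (\<lambda>w. v + w) ` W)"

end

theory Submission
  imports Defs
begin

lemma card_span_indep:
  fixes B :: "('a::{finite,field}^'n) set"
  shows "vec.independent B \<Longrightarrow> card (vec.span B) = CARD('a) ^ card B"
proof (induction B rule: finite_induct[OF finite])
  case 1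
  then show ?case by simp
next
  case (2 b B)
  have bB: "b \<notin> B" using 2 by auto
  have ins: "vec.independent (insert b B)" using 2 by auto
  have iB: "vec.independent B" and nb: "b \<notin> vec.span B"
    using ins bB vec.independent_insert[of b B] by auto
  have eq: "vec.span (insert b B) = (\<lambda>(c,x). c *s b + x) ` (UNIV \<times> vec.span B)"
  proof
    show "vec.span (insert b B) \<subseteq> (\<lambda>(c,x). c *s b + x) ` (UNIV \<times> vec.span B)"
    proof
      fix x assume "x \<in> vec.span (insert b B)"
      then obtain c where "x - c *s b \<in> vec.span B" using vec.span_insert by blast
      then show "x \<in> (\<lambda>(c,x). c *s b + x) ` (UNIV \<times> vec.span B)"
        by (intro image_eqI[of _ _ "(c, x - c *s b)"]) auto
    qed
  next
    show "(\<lambda>(c,x). c *s b + x) ` (UNIV \<times> vec.span B) \<subseteq> vec.span (insert b B)"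
    proof clarify
      fix c y assume "y \<in> vec.span B"
      then have y: "y \<in> vec.span (insert b B)" using vec.span_mono[of B "insert b B"] by auto
      have "c *s b \<in> vec.span (insert b B)" by (simp add: vec.span_base vec.span_scale)
      then show "c *s b + y \<in> vec.span (insert b B)" using y vec.span_add by blast
    qed
  qed
  have inj: "inj_on (\<lambda>(c,x). c *s b + x) (UNIV \<times> vec.span B)"
  proof (rule inj_onI, clarsimp)
    fix c x c' x'
    assume x: "x \<in> vec.span B" and x': "x' \<in> vec.span B" and e: "c *s b + x = c' *s b + x'"
    have "(c - c') *s b = x' - x" using e by (simp add: algebra_simps vec.scale_left_diff_distrib)
    moreover have "x' - x \<in> vec.span B" using x x' vec.span_diff by blast
    ultimately have m: "(c - c') *s b \<in> vec.span B" by simp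
    have "c = c'"
    proof (rule ccontr)
      assume "c \<noteq> c'"
      then have ic: "inverse (c - c') * (c - c') = 1" by simp
      have "inverse (c - c') *s ((c - c') *s b) = (inverse (c - c') * (c - c')) *s b"
        by (rule vec.scale_scale)
      then have "inverse (c - c') *s ((c - c') *s b) = b" unfolding ic by simp
      then show False using nb vec.span_scale[OF m, of "inverse (c - c')"] by simp
    qed
    then show "c = c' \<and> x = x'" using e by simp
  qed
  have "card (vec.span (insert b B)) = card ((UNIV :: 'a set) \<times> vec.span B)"
    using eq card_image[OF inj] by (simp only:)
  also have "\<dots> = CARD('a) * CARD('a) ^ card B" using 2 iB by (simp add: card_cartesian_product)
  finally show ?case using 2 by simp
qed

lemma card_span:
  fixes X :: "('a::{finite,field}^'n) set"
  shows "card (vec.span X) = CARD('a) ^ vec.dim X"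
proof -
  obtain B where B: "B \<subseteq> vec.span X" "vec.independent B" "vec.span X \<subseteq> vec.span B" "card B = vec.dim (vec.span X)"
    using vec.basis_exists by blast
  have "vec.span B = vec.span X"
    using B vec.span_subspace vec.subspace_span by blast
  then show ?thesis using card_span_indep[OF B(2)] B(4) by simp
qed

lemma card_subspace:
  fixes S :: "('a::{finite,field}^'n) set"
  shows "vec.subspace S \<Longrightarrow> card S = CARD('a) ^ vec.dim S"
  using card_span[of S] vec.span_eq_iff by metis

fun Bf :: "real \<Rightarrow> nat \<Rightarrow> nat \<Rightarrow> real" where
  "Bf a 0 e = 1"
| "Bf a (Suc t) e = a ^ (e + 1) * Bf a t e + (1 - a ^ e) * Bf a t (e - 1)"

lemma Bf_nonneg: "0 \<le> a \<Longrightarrow> a \<le> 1 \<Longrightarrow> 0 \<le> Bf a t e"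
proof (induction t arbitrary: e)
  case 0 then show ?case by simp
next
  case (Suc t)
  have "0 \<le> 1 - a ^ e" using Suc.prems by (simp add: power_le_one)
  then show ?case using Suc by simp
qed

lemma Bf_le1: "0 \<le> a \<Longrightarrow> a \<le> 1 \<Longrightarrow> Bf a t e \<le> 1"
proof (induction t arbitrary: e)
  case 0 then show ?case by simp
next
  case (Suc t)
  have h1: "0 \<le> 1 - a ^ e" using Suc.prems by (simp add: power_le_one)
  have h2: "a ^ (e+1) \<le> a ^ e" using mult_left_le_one_le[of "a^e" a] Suc.prems by simp
  have "a ^ (e + 1) * Bf a t e \<le> a ^ (e+1)"
    using Suc by (simp add: mult_left_le)
  moreover have "(1 - a ^ e) * Bf a t (e - 1) \<le> 1 - a ^ e"
    using Suc h1 by (simp add: mult_left_le)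
  ultimately show ?case using h2 by simp
qed

lemma Bf_mono: "0 \<le> a \<Longrightarrow> a \<le> 1 \<Longrightarrow> Bf a t e \<le> Bf a t (Suc e)"
proof (induction t arbitrary: e)
  case 0 then show ?case by simp
next
  case (Suc t)
  have "a ^ e \<le> 1" "a ^ (e+1) \<le> 1" using Suc.prems power_le_one by blast+
  then have h1: "0 \<le> 1 - a ^ e" "0 \<le> 1 - a ^ (e+1)" by simp_all
  have pe: "0 \<le> a ^ e" "0 \<le> a ^ (e+1)" "0 \<le> a^(e+2)" using Suc.prems by simp_all
  have m1: "Bf a t (e - 1) \<le> Bf a t e"
    using Suc by (cases e) auto
  have m2: "Bf a t e \<le> Bf a t (Suc e)" using Suc by blast
  have nn: "0 \<le> Bf a t e" using Bf_nonneg Suc.prems by blast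
  have "Bf a (Suc t) e \<le> a ^ (e + 1) * Bf a t e + (1 - a ^ e) * Bf a t e"
    using m1 h1 by (simp add: mult_left_mono)
  also have "\<dots> = (a ^ (e + 1) + 1 - a ^ e) * Bf a t e" by algebra
  also have "\<dots> \<le> (a ^ (e + 2) + 1 - a ^ (e+1)) * Bf a t e"
  proof (rule mult_right_mono[OF _ nn])
    have "0 \<le> a ^ e * (1 - a)^2" using pe by simp
    then show "a ^ (e + 1) + 1 - a ^ e \<le> a ^ (e + 2) + 1 - a ^ (e + 1)"
      by (simp add: power2_eq_square algebra_simps)
  qed
  also have "\<dots> = a ^ (e + 2) * Bf a t e + (1 - a ^ (e+1)) * Bf a t e" by algebra
  also have "\<dots> \<le> a ^ (e + 2) * Bf a t (Suc e) + (1 - a ^ (e+1)) * Bf a t e"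
    using m2 pe by (simp add: mult_left_mono)
  also have "\<dots> = Bf a (Suc t) (Suc e)" by simp
  finally show ?case .
qed

lemma Bf_diag: assumes "0 \<le> a" "a \<le> 1/2" "1 \<le> t" shows "Bf a t t \<le> 1 - a^2 + a^3"
  using assms(3)
proof (induction t rule: nat_induct_at_least)
  case base
  have "0 \<le> a * (1 - a)^2" using assms by simp
  then show ?case by (simp add: power2_eq_square power3_eq_cube algebra_simps)
next
  case (Suc t)
  note st = this
  have a1: "a \<le> 1" using st assms by simp
  have pe: "0 \<le> a ^ (t+1)" using st assms by simp
  have "a ^ (t+1) \<le> 1" using power_le_one a1 assms(1) by blast
  then have h1: "0 \<le> 1 - a ^ (t+1)" by simp
  have b1: "Bf a t (Suc t) \<le> 1" using Bf_le1[OF assms(1) a1] by blast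
  have aD: "a \<le> 1 - a^2 + a^3"
  proof -
    have "a^2 \<le> 1/4" using st assms power_mono[of a "1/2" 2] by (simp add: power2_eq_square)
    moreover have "0 \<le> a^3" using assms by simp
    ultimately show ?thesis using assms by linarith
  qed
  have "Bf a (Suc t) (Suc t) = a ^ (t+1) * (a * Bf a t (Suc t)) + (1 - a ^ (t+1)) * Bf a t t"
    by simp
  also have "\<dots> \<le> a ^ (t+1) * (1 - a^2 + a^3) + (1 - a ^ (t+1)) * (1 - a^2 + a^3)"
  proof (rule add_mono)
    have "a * Bf a t (Suc t) \<le> 1 - a^2 + a^3" using b1 aD assms(1) mult_left_le[of "Bf a t (Suc t)" a] by linarith
    then show "a ^ (t+1) * (a * Bf a t (Suc t)) \<le> a ^ (t+1) * (1 - a^2 + a^3)"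
      using pe by (simp add: mult_left_mono)
    show "(1 - a ^ (t+1)) * Bf a t t \<le> (1 - a ^ (t+1)) * (1 - a^2 + a^3)"
      using st assms h1 by (simp add: mult_left_mono)
  qed
  also have "\<dots> = 1 - a^2 + a^3" by algebra
  finally show ?case .
qed

lemma Bf_main: assumes "0 \<le> a" "a \<le> 1/2" "2 \<le> s" shows "Bf a s (s - 1) \<le> a - a^3 + a^4"
  using assms(3)
proof (induction s rule: nat_induct_at_least)
  case base
  have "Bf a 2 1 = a - a^3 + a^4"
    by (simp add: numeral_2_eq_2 power2_eq_square power3_eq_cube power4_eq_xxxx algebra_simps)
  then show ?case by simp
next
  case (Suc s)
  note st = this
  have a1: "a \<le> 1" using st assms by simp
  have pe: "0 \<le> a ^ s" using st assms by simp
  have h1: "0 \<le> 1 - a ^ s" using st assms a1 by (simp add: power_le_one)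
  have D: "Bf a s s \<le> 1 - a^2 + a^3" using Bf_diag[OF assms(1,2), of s] st(1) by simp
  obtain s' where s': "s = Suc s'" using st assms by (cases s) auto
  have "Bf a (Suc s) (Suc s - 1) = a ^ s * (a * Bf a s s) + (1 - a ^ s) * Bf a s (s - 1)"
    by simp
  also have "\<dots> \<le> a ^ s * (a - a^3 + a^4) + (1 - a ^ s) * (a - a^3 + a^4)"
  proof (rule add_mono)
    have "a * Bf a s s \<le> a * (1 - a^2 + a^3)" using D assms(1) by (simp add: mult_left_mono)
    also have "\<dots> = a - a^3 + a^4" by algebra
    finally show "a ^ s * (a * Bf a s s) \<le> a ^ s * (a - a^3 + a^4)"
      using pe by (simp add: mult_left_mono)
    show "(1 - a ^ s) * Bf a s (s - 1) \<le> (1 - a ^ s) * (a - a^3 + a^4)"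
      using st assms h1 by (simp add: mult_left_mono)
  qed
  also have "\<dots> = a - a^3 + a^4" by algebra
  finally show ?case .
qed

definition goodL :: "('a::field ^ 'n) set \<Rightarrow> 'a ^ 'n \<Rightarrow> ('a ^ 'n) list \<Rightarrow> bool" where
  "goodL W v xs \<longleftrightarrow> distinct xs \<and> vec.independent (set xs) \<and> v \<notin> vec.span (set xs \<union> W)"

definition Aset :: "('a::field ^ 'n) set \<Rightarrow> 'a ^ 'n \<Rightarrow> nat \<Rightarrow> ('a ^ 'n) list \<Rightarrow> ('a ^ 'n) list set" where
  "Aset W v t ys = {zs. length zs = t \<and> goodL W v (zs @ ys)}"

lemma goodL_suffix: "goodL W v (xs @ ys) \<Longrightarrow> goodL W v ys"
  unfolding goodL_def
  using vec.independent_mono[of "set (xs @ ys)" "set ys"] vec.span_mono[of "set ys \<union> W" "set (xs @ ys) \<union> W"]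
  by auto

lemma finite_Aset: "finite (Aset (W :: ('a::{finite,field} ^ 'n) set) v t ys)"
proof -
  have "Aset W v t ys \<subseteq> {zs. set zs \<subseteq> UNIV \<and> length zs = t}" unfolding Aset_def by auto
  moreover have "finite {zs. set zs \<subseteq> (UNIV :: ('a^'n) set) \<and> length zs = t}"
    by (rule finite_lists_length_eq) simp
  ultimately show ?thesis by (rule finite_subset)
qed

lemma Aset_Suc: "Aset W v (Suc t) ys \<subseteq> (\<Union>z\<in>{z. goodL W v (z # ys)}. (\<lambda>zs. zs @ [z]) ` Aset W v t (z # ys))"
proof
  fix zs assume zs: "zs \<in> Aset W v (Suc t) ys"
  then have "zs \<noteq> []" unfolding Aset_def by auto
  then obtain xs z where e: "zs = xs @ [z]" using rev_exhaust by blast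
  have g: "goodL W v (xs @ (z # ys))" using zs e unfolding Aset_def by simp
  then have "goodL W v (z # ys)" using goodL_suffix by blast
  moreover have "xs \<in> Aset W v t (z # ys)" using g zs e unfolding Aset_def by simp
  ultimately show "zs \<in> (\<Union>z\<in>{z. goodL W v (z # ys)}. (\<lambda>zs. zs @ [z]) ` Aset W v t (z # ys))"
    using e by blast
qed

lemma card_UNIV_vec: "card (UNIV :: ('a::{finite,field}^'n) set) = CARD('a) ^ CARD('n)"
  using card_span[of "UNIV :: ('a^'n) set"] vec.span_UNIV vec_dim_card by metis

lemma step_ineq:
  fixes Q x y qq B0 B1 :: real
  assumes "0 < Q" "0 \<le> y" "y \<le> x" "1 \<le> qq" "qq * x \<le> Q" "0 \<le> B0" "B0 \<le> B1"
  shows "(x - y) * B1 + (Q - qq * x) * B0 \<le> (Q - y) * ((x / Q) * B1 + (1 - qq * x / Q) * B0)"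
proof -
  have eq: "(Q - y) * ((x / Q) * B1 + (1 - qq * x / Q) * B0) - ((x - y) * B1 + (Q - qq * x) * B0)
        = (y / Q) * (B1 * (Q - x) - B0 * (Q - qq * x))"
    using assms(1) by (simp add: field_simps)
  have "B0 * (Q - qq * x) \<le> B1 * (Q - qq * x)" using assms by (simp add: mult_right_mono)
  also have "\<dots> \<le> B1 * (Q - x)"
  proof (rule mult_left_mono)
    have "x \<le> qq * x" using assms mult_right_mono[of 1 qq x] by simp
    then show "Q - qq * x \<le> Q - x" by simp
    show "0 \<le> B1" using assms by simp
  qed
  finally have "0 \<le> (y / Q) * (B1 * (Q - x) - B0 * (Q - qq * x))"
    using assms by simp
  then show ?thesis using eq by simp
qed

lemma count_bound:
  fixes W :: "('a::{finite,field}^'n) set"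
  shows "goodL W v ys \<Longrightarrow> real (card (Aset W v t ys))
     \<le> (\<Prod>i<t. real (CARD('a) ^ CARD('n) - CARD('a) ^ (length ys + i)))
        * Bf (1 / real CARD('a)) t (CARD('n) - 1 - vec.dim (set ys \<union> W))"
proof (induction t arbitrary: ys)
  case 0
  have s0: "Aset W v 0 ys \<subseteq> {[]}" unfolding Aset_def by auto
  have "card (Aset W v 0 ys) \<le> card {[]}" using card_mono[of "{[]}" "Aset W v 0 ys"] s0 by simp
  then show ?case by simp
next
  case (Suc t ys)
  define q where "q = CARD('a)"
  define k where "k = CARD('n)"
  define a where "a = 1 / real q"
  define X where "X = set ys \<union> W"
  define j where "j = length ys"
  define d where "d = vec.dim X"
  define e where "e = k - 1 - d"
  have q1: "1 \<le> q" unfolding q_def by (simp add: Suc_leI)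
  have g: "distinct ys" "vec.independent (set ys)" "v \<notin> vec.span X"
    using Suc.prems unfolding goodL_def X_def by auto
  have dj: "vec.dim (set ys) = j"
    using vec.dim_eq_card_independent[OF g(2)] distinct_card[OF g(1)] j_def by simp
  have jd: "j \<le> d" using vec.dim_subset[of "set ys" X] dj unfolding X_def d_def by simp
  have dv: "vec.dim (insert v X) = d + 1" using vec.dim_insert[of v X] g(3) unfolding d_def by simp
  have dk: "d + 1 \<le> k" using dim_subset_UNIV_cart_gen[of "insert v X"] dv k_def by simp
  define S1 where "S1 = vec.span X - vec.span (set ys)"
  define S2 where "S2 = UNIV - vec.span (insert v X)"
  have sub1: "vec.span (set ys) \<subseteq> vec.span X" using vec.span_mono X_def by blast
  have sub2: "vec.span X \<subseteq> vec.span (insert v X)" using vec.span_mono by blast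
  have cS1: "card S1 = q ^ d - q ^ j"
    unfolding S1_def using card_Diff_subset[OF _ sub1] card_span[of X] card_span[of "set ys"] dj d_def q_def
    by simp
  have cS2: "card S2 = q ^ k - q ^ (d + 1)"
    unfolding S2_def using card_Diff_subset[of "vec.span (insert v X)" UNIV] card_span[of "insert v X"]
      dv card_UNIV_vec q_def k_def by simp
  have disj: "S1 \<inter> S2 = {}" unfolding S1_def S2_def using sub2 by blast
  define Z where "Z = {z. goodL W v (z # ys)}"
  have ZS: "Z \<subseteq> S1 \<union> S2"
  proof
    fix z assume "z \<in> Z"
    then have gz: "goodL W v (z # ys)" unfolding Z_def by simp
    then have zy: "z \<notin> vec.span (set ys)"
      unfolding goodL_def using vec.independent_insert[of z "set ys"] by auto
    have vz: "v \<notin> vec.span (insert z X)" using gz unfolding goodL_def X_def by simp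
    show "z \<in> S1 \<union> S2"
    proof (cases "z \<in> vec.span X")
      case True then show ?thesis using zy S1_def by blast
    next
      case False
      have "z \<notin> vec.span (insert v X)"
        using vec.in_span_insert[of z v X] False vz by blast
      then show ?thesis using S2_def by blast
    qed
  qed
  define P' where "P' = (\<Prod>i<t. real (q ^ k - q ^ (Suc j + i)))"
  define B1 where "B1 = Bf a t e"
  define B0 where "B0 = Bf a t (e - 1)"
  have a01: "0 \<le> a" "a \<le> 1" using q1 unfolding a_def by auto
  have P'0: "0 \<le> P'" unfolding P'_def by (simp add: prod_nonneg)
  have B00: "0 \<le> B0" unfolding B0_def using Bf_nonneg a01 by blast
  have B01: "B0 \<le> B1" unfolding B0_def B1_def using Bf_mono[OF a01, of t "e - 1"] by (cases e) auto
  define f where "f = (\<lambda>z. real (card (Aset W v t (z # ys))))"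
  have f1: "f z \<le> P' * B1" if "z \<in> Z \<inter> S1" for z
  proof -
    have "z \<in> vec.span X" using that S1_def by blast
    then have "vec.dim (set (z # ys) \<union> W) = d" using vec.dim_insert[of z X] X_def d_def by simp
    then show ?thesis using Suc.IH[of "z # ys"] that Z_def
      unfolding f_def P'_def B1_def q_def k_def a_def e_def j_def by simp
  qed
  have f2: "f z \<le> P' * B0" if "z \<in> Z \<inter> S2" for z
  proof -
    have "z \<notin> vec.span X" using that S2_def sub2 by blast
    then have "vec.dim (set (z # ys) \<union> W) = d + 1" using vec.dim_insert[of z X] X_def d_def by simp
    moreover have "k - 1 - (d + 1) = e - 1" using e_def by simp
    ultimately show ?thesis using Suc.IH[of "z # ys"] that Z_def
      unfolding f_def P'_def B0_def q_def k_def a_def j_def by simp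
  qed
  have finZ: "finite Z" by simp
  have finU: "finite (\<Union>z\<in>Z. (\<lambda>zs. zs @ [z]) ` Aset W v t (z # ys))"
    by (intro finite_UN_I finZ finite_imageI finite_Aset)
  have "card (Aset W v (Suc t) ys) \<le> card (\<Union>z\<in>Z. (\<lambda>zs. zs @ [z]) ` Aset W v t (z # ys))"
    using Aset_Suc[of W v t ys] Z_def by (intro card_mono[OF finU]) auto
  also have "\<dots> \<le> (\<Sum>z\<in>Z. card ((\<lambda>zs. zs @ [z]) ` Aset W v t (z # ys)))"
    by (rule card_UN_le[OF finZ])
  also have "\<dots> \<le> (\<Sum>z\<in>Z. card (Aset W v t (z # ys)))"
    by (intro sum_mono card_image_le finite_Aset)
  finally have "real (card (Aset W v (Suc t) ys)) \<le> (\<Sum>z\<in>Z. f z)"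
    unfolding f_def by (metis of_nat_le_iff of_nat_sum)
  also have "(\<Sum>z\<in>Z. f z) = (\<Sum>z\<in>Z \<inter> S1. f z) + (\<Sum>z\<in>Z \<inter> S2. f z)"
  proof -
    have "Z = (Z \<inter> S1) \<union> (Z \<inter> S2)" using ZS by blast
    then show ?thesis using sum.union_disjoint[of "Z \<inter> S1" "Z \<inter> S2" f] disj finZ
      by (metis Int_Un_distrib2 Int_assoc Int_commute Int_empty_right finite_Int)
  qed
  also have "\<dots> \<le> real (card S1) * (P' * B1) + real (card S2) * (P' * B0)"
  proof (rule add_mono)
    have "(\<Sum>z\<in>Z \<inter> S1. f z) \<le> (\<Sum>z\<in>Z \<inter> S1. P' * B1)" using f1 by (rule sum_mono)
    also have "\<dots> = real (card (Z \<inter> S1)) * (P' * B1)" by simp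
    also have "\<dots> \<le> real (card S1) * (P' * B1)"
      using P'0 B00 B01 card_mono[of S1 "Z \<inter> S1"]
      by (intro mult_right_mono) auto
    finally show "(\<Sum>z\<in>Z \<inter> S1. f z) \<le> real (card S1) * (P' * B1)" .
    have "(\<Sum>z\<in>Z \<inter> S2. f z) \<le> (\<Sum>z\<in>Z \<inter> S2. P' * B0)" using f2 by (rule sum_mono)
    also have "\<dots> = real (card (Z \<inter> S2)) * (P' * B0)" by simp
    also have "\<dots> \<le> real (card S2) * (P' * B0)"
      using P'0 B00 card_mono[of S2 "Z \<inter> S2"]
      by (intro mult_right_mono) auto
    finally show "(\<Sum>z\<in>Z \<inter> S2. f z) \<le> real (card S2) * (P' * B0)" .
  qed
  also have "\<dots> = P' * ((real q ^ d - real q ^ j) * B1 + (real q ^ k - real q * real q ^ d) * B0)"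
  proof -
    have "q ^ j \<le> q ^ d" using q1 jd power_increasing by blast
    moreover have "q ^ (d+1) \<le> q ^ k" using q1 dk power_increasing by blast
    ultimately show ?thesis using cS1 cS2 by (simp add: of_nat_diff algebra_simps)
  qed
  also have "\<dots> \<le> P' * ((real q ^ k - real q ^ j) * ((real q ^ d / real q ^ k) * B1
                  + (1 - real q * real q ^ d / real q ^ k) * B0))"
  proof (rule mult_left_mono[OF _ P'0], rule step_ineq)
    show "0 < real q ^ k" using q1 by simp
    show "0 \<le> real q ^ j" by simp
    show "real q ^ j \<le> real q ^ d" using q1 jd by (simp add: power_increasing)
    show "1 \<le> real q" using q1 by simp
    have "real q ^ (d + 1) \<le> real q ^ k" using power_increasing[of "d+1" k "real q"] q1 dk by simp
    then show "real q * real q ^ d \<le> real q ^ k" by simp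
    show "0 \<le> B0" by (rule B00)
    show "B0 \<le> B1" by (rule B01)
  qed
  also have "\<dots> = P' * ((real q ^ k - real q ^ j) * (a ^ (e + 1) * B1 + (1 - a ^ e) * B0))"
  proof -
    have ke: "k = d + (e + 1)" using dk e_def by simp
    have qp: "0 < real q" using q1 by simp
    have "real q ^ d / real q ^ k = a ^ (e + 1)"
      unfolding ke a_def using qp by (simp add: power_add power_one_over)
    moreover have "real q * real q ^ d / real q ^ k = a ^ e"
      unfolding ke a_def using qp by (simp add: power_add power_one_over)
    ultimately show ?thesis by simp
  qed
  also have "\<dots> = (\<Prod>i<Suc t. real (q ^ k - q ^ (j + i))) * Bf a (Suc t) e"
  proof -
    have "q ^ j \<le> q ^ k" using q1 jd dk power_increasing[of j k q] by simp
    then have h0: "real (q ^ k - q ^ (j + 0)) = real q ^ k - real q ^ j" by (simp add: of_nat_diff)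
    have "(\<Prod>i<Suc t. real (q ^ k - q ^ (j + i)))
        = real (q ^ k - q ^ (j + 0)) * (\<Prod>i<t. real (q ^ k - q ^ (j + Suc i)))"
      by (rule prod.lessThan_Suc_shift)
    also have "(\<Prod>i<t. real (q ^ k - q ^ (j + Suc i))) = P'" unfolding P'_def by simp
    finally have p: "(\<Prod>i<Suc t. real (q ^ k - q ^ (j + i))) = (real q ^ k - real q ^ j) * P'"
      using h0 by simp
    have b: "Bf a (Suc t) e = a ^ (e + 1) * B1 + (1 - a ^ e) * B0" unfolding B0_def B1_def by simp
    show ?thesis unfolding p b by (simp only: mult_ac)
  qed
  finally show ?case unfolding q_def k_def a_def e_def d_def X_def j_def .
qed

definition Bset :: "('a::field ^ 'n) set \<Rightarrow> nat \<Rightarrow> ('a ^ 'n) list \<Rightarrow> ('a ^ 'n) list set" where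
  "Bset S t ys = {zs. length zs = t \<and> set zs \<subseteq> S \<and> distinct (zs @ ys) \<and> vec.independent (set (zs @ ys))}"

lemma finite_Bset: "finite (Bset (S :: ('a::{finite,field} ^ 'n) set) t ys)"
proof -
  have "Bset S t ys \<subseteq> {zs. set zs \<subseteq> UNIV \<and> length zs = t}" unfolding Bset_def by auto
  moreover have "finite {zs. set zs \<subseteq> (UNIV :: ('a^'n) set) \<and> length zs = t}"
    by (rule finite_lists_length_eq) simp
  ultimately show ?thesis by (rule finite_subset)
qed

lemma Bset_card:
  fixes S :: "('a::{finite,field}^'n) set"
  assumes S: "vec.subspace S"
  shows "set ys \<subseteq> S \<Longrightarrow> distinct ys \<Longrightarrow> vec.independent (set ys) \<Longrightarrow> length ys + t \<le> vec.dim S \<Longrightarrow>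
    (\<Prod>i<t. (CARD('a) ^ vec.dim S - CARD('a) ^ (length ys + i))) \<le> card (Bset S t ys)"
proof (induction t arbitrary: ys)
  case 0
  have "[] \<in> Bset S 0 ys" using 0 unfolding Bset_def by simp
  then have "card {[]} \<le> card (Bset S 0 ys)" using card_mono[OF finite_Bset, of "{[]}" S 0 ys] by simp
  then show ?case by simp
next
  case (Suc t ys)
  define q where "q = CARD('a)"
  define m where "m = vec.dim S"
  define j where "j = length ys"
  define T where "T = S - vec.span (set ys)"
  have q1: "1 \<le> q" unfolding q_def by (simp add: Suc_leI)
  have dj: "vec.dim (set ys) = j"
    using vec.dim_eq_card_independent[OF Suc.prems(3)] distinct_card[OF Suc.prems(2)] j_def by simp
  have spS: "vec.span (set ys) \<subseteq> S" using vec.span_minimal[OF Suc.prems(1) S] .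
  have cT: "card T = q ^ m - q ^ j"
    unfolding T_def using card_Diff_subset[OF _ spS] card_subspace[OF S] card_span[of "set ys"] dj m_def q_def
    by simp
  have jm: "j + Suc t \<le> m" using Suc.prems(4) j_def m_def by simp
  define P' where "P' = (\<Prod>i<t. (q ^ m - q ^ (Suc j + i)))"
  have IH: "P' \<le> card (Bset S t (z # ys))" if "z \<in> T" for z
  proof -
    have z: "z \<in> S" "z \<notin> vec.span (set ys)" using that T_def by auto
    have "z \<notin> set ys" using z(2) vec.span_base by blast
    then have "set (z # ys) \<subseteq> S" "distinct (z # ys)" "vec.independent (set (z # ys))"
      using Suc.prems z vec.independent_insert[of z "set ys"] by auto
    moreover have "length (z # ys) + t \<le> vec.dim S" using jm j_def m_def by simp
    ultimately show ?thesis using Suc.IH[of "z # ys"] unfolding P'_def q_def m_def j_def by simp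
  qed
  have sub: "(\<Union>z\<in>T. (\<lambda>zs. zs @ [z]) ` Bset S t (z # ys)) \<subseteq> Bset S (Suc t) ys"
  proof clarify
    fix z zs assume "z \<in> T" "zs \<in> Bset S t (z # ys)"
    then show "zs @ [z] \<in> Bset S (Suc t) ys" unfolding Bset_def T_def by auto
  qed
  have inj: "inj_on (\<lambda>zs. zs @ [z]) A" for z :: "'a^'n" and A by (rule inj_onI) simp
  have finT: "finite T" by simp
  have "card T * P' = (\<Sum>z\<in>T. P')" by simp
  also have "\<dots> \<le> (\<Sum>z\<in>T. card (Bset S t (z # ys)))" using IH by (rule sum_mono)
  also have "\<dots> = (\<Sum>z\<in>T. card ((\<lambda>zs. zs @ [z]) ` Bset S t (z # ys)))"
    using card_image[OF inj] by simp
  also have "\<dots> = card (\<Union>z\<in>T. (\<lambda>zs. zs @ [z]) ` Bset S t (z # ys))"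
    by (rule card_UN_disjoint[symmetric]) (auto simp: finite_Bset)
  also have "\<dots> \<le> card (Bset S (Suc t) ys)" by (rule card_mono[OF finite_Bset sub])
  finally have fin: "card T * P' \<le> card (Bset S (Suc t) ys)" .
  have "(\<Prod>i<Suc t. (q ^ m - q ^ (j + i))) = (q ^ m - q ^ (j + 0)) * (\<Prod>i<t. (q ^ m - q ^ (j + Suc i)))"
    by (rule prod.lessThan_Suc_shift)
  also have "\<dots> = card T * P'" unfolding cT P'_def by simp
  finally show ?case using fin unfolding q_def m_def j_def by simp
qed

lemma qbinom_eq:
  fixes q k s :: nat
  assumes q: "2 \<le> q" and sk: "s \<le> k"
  shows "(\<Prod>i<s. real (q ^ k - q ^ i)) = (\<Prod>i<s. real (q ^ s - q ^ i)) * qbinom q k s"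
proof -
  have qr: "1 < real q" using q by simp
  have A: "(\<Prod>i<s. real (q ^ k - q ^ i)) = (\<Prod>i<s. real q ^ i) * (\<Prod>i<s. (real q ^ (k - i) - 1))"
  proof -
    have "(\<Prod>i<s. real (q ^ k - q ^ i)) = (\<Prod>i<s. real q ^ i * (real q ^ (k - i) - 1))"
    proof (rule prod.cong[OF refl])
      fix i assume "i \<in> {..<s}"
      then have ik: "i \<le> k" using sk by simp
      have "q ^ i \<le> q ^ k" using ik q by (simp add: power_increasing)
      moreover have "real q ^ k = real q ^ i * real q ^ (k - i)" using ik by (simp add: power_add[symmetric])
      ultimately show "real (q ^ k - q ^ i) = real q ^ i * (real q ^ (k - i) - 1)"
        by (simp add: of_nat_diff algebra_simps)
    qed
    then show ?thesis by (simp add: prod.distrib)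
  qed
  have B: "(\<Prod>i<s. real (q ^ s - q ^ i)) = (\<Prod>i<s. real q ^ i) * (\<Prod>i\<in>{1..s}. (real q ^ i - 1))"
  proof -
    have "(\<Prod>i<s. real (q ^ s - q ^ i)) = (\<Prod>i<s. real q ^ i * (real q ^ (s - i) - 1))"
    proof (rule prod.cong[OF refl])
      fix i assume "i \<in> {..<s}"
      then have ik: "i \<le> s" by simp
      have "q ^ i \<le> q ^ s" using ik q by (simp add: power_increasing)
      moreover have "real q ^ s = real q ^ i * real q ^ (s - i)" using ik by (simp add: power_add[symmetric])
      ultimately show "real (q ^ s - q ^ i) = real q ^ i * (real q ^ (s - i) - 1)"
        by (simp add: of_nat_diff algebra_simps)
    qed
    also have "\<dots> = (\<Prod>i<s. real q ^ i) * (\<Prod>i<s. (real q ^ (s - i) - 1))" by (simp add: prod.distrib)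
    also have "(\<Prod>i<s. (real q ^ (s - i) - 1)) = (\<Prod>i<s. (real q ^ (Suc i) - 1))"
    proof -
      have "(\<Prod>i<s. (real q ^ (s - i) - 1)) = (\<Prod>i<s. (\<lambda>i. real q ^ (Suc i) - 1) (s - Suc i))"
        by (rule prod.cong[OF refl]) (simp add: Suc_diff_Suc)
      also have "\<dots> = (\<Prod>i<s. real q ^ (Suc i) - 1)" by (rule prod.nat_diff_reindex)
      finally show ?thesis .
    qed
    also have "(\<Prod>i<s. (real q ^ (Suc i) - 1)) = (\<Prod>i\<in>{1..s}. (real q ^ i - 1))"
      using prod.atLeast1_atMost_eq[of "\<lambda>i. real q ^ i - 1" s] by simp
    finally show ?thesis .
  qed
  have nz: "(\<Prod>i\<in>{1..s}. (real q ^ i - 1)) \<noteq> 0"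
  proof -
    have "real q ^ i \<noteq> 1" if "i \<in> {1..s}" for i
      using one_less_power[OF qr, of i] that by simp
    then show ?thesis by (simp add: prod_zero_iff)
  qed
  show ?thesis unfolding A B qbinom_def using sk nz by simp
qed

theorem lemma3p1:
  fixes H :: "('a::{finite,field} ^ 'n) set" and q k s :: nat
  assumes "q = CARD('a)" and "k = CARD('n)"
    and "2 \<le> s" and "s \<le> k"
    and "aff_subspace (k - s) H" and "0 \<notin> H"
  shows "real (card {S \<in> lin_subspaces s. S \<inter> H = {}})
           \<le> (real q ^ 3 - real q + 1) / real q ^ 4 * qbinom q k s"
proof -
  obtain v W where W: "W \<in> lin_subspaces (k - s)" and H: "H = (\<lambda>w. v + w) ` W"
    using assms(5) unfolding aff_subspace_def by blast
  have Wsub: "vec.subspace W" and dimW: "vec.dim W = k - s" using W unfolding lin_subspaces_def by auto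
  have vW: "v \<notin> W"
  proof
    assume "v \<in> W"
    then have "- v \<in> W" using vec.subspace_neg[OF Wsub] by blast
    then have "v + - v \<in> H" unfolding H by blast
    then show False using assms(6) by simp
  qed
  have q2: "2 \<le> q"
  proof -
    have "card {0::'a, 1} \<le> card (UNIV :: 'a set)" by (rule card_mono) auto
    then show ?thesis using assms(1) by simp
  qed
  have spW: "vec.span W = W" using Wsub vec.span_eq_iff by blast
  have good0: "goodL W v []" unfolding goodL_def by (simp add: spW vW vec.independent_empty)
  define F where "F = {S \<in> lin_subspaces s. S \<inter> H = {}}"
  define beta where "beta = (\<Prod>i<s. (q ^ s - q ^ i))"
  define a where "a = 1 / real q"
  have a0: "0 \<le> a" "a \<le> 1/2" using q2 unfolding a_def by (auto simp: field_simps)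
  have cb: "real (card (Aset W v s [])) \<le> (\<Prod>i<s. real (q ^ k - q ^ i)) * Bf a s (s - 1)"
  proof -
    have "k - 1 - vec.dim (set [] \<union> W) = s - 1" using dimW assms(3,4) by simp
    then show ?thesis using count_bound[OF good0, of s] assms(1,2) unfolding a_def by simp
  qed
  have bm: "Bf a s (s - 1) \<le> a - a^3 + a^4" using Bf_main[OF a0 assms(3)] .
  have spanB: "vec.span (set zs) = S" if "S \<in> lin_subspaces s" "zs \<in> Bset S s []" for S zs
  proof -
    have S: "vec.subspace S" "vec.dim S = s" using that(1) unfolding lin_subspaces_def by auto
    have z: "length zs = s" "set zs \<subseteq> S" "distinct zs" "vec.independent (set zs)"
      using that(2) unfolding Bset_def by auto
    have "S \<subseteq> vec.span (set zs)"
      using vec.card_ge_dim_independent[OF z(2) z(4)] S(2) z(1) distinct_card[OF z(3)] by simp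
    then show ?thesis using vec.span_subspace[OF z(2) _ S(1)] by blast
  qed
  have BA: "Bset S s [] \<subseteq> Aset W v s []" if "S \<in> F" for S
  proof
    fix zs assume zs: "zs \<in> Bset S s []"
    have S3: "S \<in> lin_subspaces s" "S \<inter> H = {}" using that unfolding F_def by auto
    have S1: "vec.subspace S" using S3(1) unfolding lin_subspaces_def by simp
    note S = S1 S3(2) S3(1)
    have z: "length zs = s" "set zs \<subseteq> S" "distinct zs" "vec.independent (set zs)"
      using zs unfolding Bset_def by auto
    have "v \<notin> vec.span (set zs \<union> W)"
    proof
      assume "v \<in> vec.span (set zs \<union> W)"
      moreover have "vec.span (set zs \<union> W) \<subseteq> vec.span (S \<union> W)"
        by (rule vec.span_mono) (use z(2) in blast)
      ultimately have "v \<in> vec.span (S \<union> W)" by blast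
      then obtain x y where xy: "v = x + y" "x \<in> vec.span S" "y \<in> vec.span W"
        unfolding vec.span_Un by blast
      have x: "x \<in> S" using xy(2) S(1) vec.span_eq_iff by blast
      have y: "- y \<in> W" using xy(3) spW vec.subspace_neg[OF Wsub] by blast
      have "x = v + - y" using xy(1) by simp
      then have "x \<in> H" unfolding H using y by blast
      then show False using x S(2) by blast
    qed
    then show "zs \<in> Aset W v s []" unfolding Aset_def goodL_def using z by simp
  qed
  have finF: "finite F" by (rule finite_subset[of _ UNIV]) simp_all
  have disj: "Bset S s [] \<inter> Bset S' s [] = {}" if "S \<in> F" "S' \<in> F" "S \<noteq> S'" for S S'
    using spanB that unfolding F_def by blast
  have "card F * beta = (\<Sum>S\<in>F. beta)" by simp
  also have "\<dots> \<le> (\<Sum>S\<in>F. card (Bset S s []))"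
  proof (rule sum_mono)
    fix S assume "S \<in> F"
    then have S: "vec.subspace S" "vec.dim S = s" unfolding F_def lin_subspaces_def by auto
    show "beta \<le> card (Bset S s [])" using Bset_card[OF S(1), of "[]" s] S(2) assms(1) vec.independent_empty unfolding beta_def by simp
  qed
  also have "\<dots> = card (\<Union>S\<in>F. Bset S s [])"
    by (rule card_UN_disjoint[symmetric]) (auto simp: finF finite_Bset disj)
  also have "\<dots> \<le> card (Aset W v s [])"
    by (rule card_mono[OF finite_Aset]) (use BA in blast)
  finally have c0: "card F * beta \<le> card (Aset W v s [])" .
  then have "real (card F) * real beta \<le> real (card (Aset W v s []))"
    by (simp only: of_nat_mult[symmetric] of_nat_le_iff)
  then have c1: "real (card F) * real beta \<le> (\<Prod>i<s. real (q ^ k - q ^ i)) * Bf a s (s - 1)"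
    using cb by (rule order_trans)
  have qb: "(\<Prod>i<s. real (q ^ k - q ^ i)) = real beta * qbinom q k s"
    using qbinom_eq[OF q2 assms(4)] unfolding beta_def by simp
  have betapos: "0 < real beta"
  proof -
    have "q ^ i < q ^ s" if "i < s" for i using that q2 by (simp add: power_strict_increasing)
    then have "\<forall>i\<in>{..<s}. 0 < real (q ^ s - q ^ i)" by simp
    then have "0 < (\<Prod>i<s. real (q ^ s - q ^ i))" by (intro prod_pos) blast
    then show ?thesis unfolding beta_def by simp
  qed
  have qbn: "0 \<le> qbinom q k s"
  proof -
    have "0 \<le> (\<Prod>i<s. real (q ^ k - q ^ i))" by (simp add: prod_nonneg)
    then show ?thesis using qb betapos by (simp add: zero_le_mult_iff)
  qed
  have "real (card F) * real beta \<le> real beta * (qbinom q k s * (a - a^3 + a^4))"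
  proof -
    have "(\<Prod>i<s. real (q ^ k - q ^ i)) * Bf a s (s - 1) \<le> (\<Prod>i<s. real (q ^ k - q ^ i)) * (a - a^3 + a^4)"
      using bm by (intro mult_left_mono) (simp_all add: prod_nonneg)
    then show ?thesis using c1 qb by (simp add: mult.assoc)
  qed
  then have "real (card F) \<le> qbinom q k s * (a - a^3 + a^4)"
    using betapos by (simp add: mult.commute[of "real (card F)"])
  also have "a - a^3 + a^4 = (real q ^ 3 - real q + 1) / real q ^ 4"
    unfolding a_def using q2 by (simp add: field_simps power_one_over, algebra)
  finally show ?thesis unfolding F_def by (simp add: mult.commute)
qed


end
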